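(* Let $U$ be a proper graded submodule of $M$. Then $U$ is a graded weakly $J_{gr}$-semiprime submodule of $M$ if and only if for every $r_g\in h(R)$, every graded submodule $K$ of $M$ and every $n\in\mathbb{Z}^+$ with $\{0\}\neq r_g^nK\subseteq U$, we have $r_gK\subseteq U+J_{gr}(M)$.
   Context: Standing conventions: $\Gamma$ is a group, $R=\bigoplus_{g\in\Gamma}R_g$ is a commutative $\Gamma$-graded ring with identity, and $M=\bigoplus_{g\in\Gamma}M_g$ is a unitary $\Gamma$-graded $R$-module. $h(R)=\bigcup_gR_g$, $h(M)=\bigcup_gM_g$ are the homogeneous elements. A submodule $U$ is graded if $U=\bigoplus_g(U\cap M_g)$. A graded submodule $U\neq M$ is Gr-maximal if every graded submodule $L$ with $U\subseteq L\subseteq M$ equals $U$ or $M$. $J_{gr}(M)$ is the intersection of all Gr-maximal submodules of $M$ ($=M$ if there are none). A proper graded submodule $U$ of $M$ is graded weakly $J_{gr}$-semiprime if whenever $r_g\in h(R)$, $m_h\in h(M)$, $n\in\mathbb{Z}^+$ and $0\neq r_g^nm_h\in U$, then $r_gm_h\in U+J_{gr}(M)$. *)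

theory Defs
  imports Main "HOL.Modules"
begin

definition is_direct_sum :: "'b::comm_monoid_add set \<Rightarrow> ('g \<Rightarrow> 'b set) \<Rightarrow> bool" where
  "is_direct_sum S A \<longleftrightarrow>
     (\<forall>x\<in>S. \<exists>!c. finite {g. c g \<noteq> 0} \<and> (\<forall>g. c g \<in> A g) \<and> x = (\<Sum>g\<in>{g. c g \<noteq> 0}. c g))
   \<and> (\<forall>c. finite {g. c g \<noteq> 0} \<and> (\<forall>g. c g \<in> A g) \<longrightarrow> (\<Sum>g\<in>{g. c g \<noteq> 0}. c g) \<in> S)"

definition additive_subgroup :: "'b::ab_group_add set \<Rightarrow> bool" where
  "additive_subgroup S \<longleftrightarrow> 0 \<in> S \<and> (\<forall>x\<in>S. \<forall>y\<in>S. x - y \<in> S)"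

definition graded_ring :: "('g::group_add \<Rightarrow> 'r::comm_ring_1 set) \<Rightarrow> bool" where
  "graded_ring Rg \<longleftrightarrow>
     (\<forall>g. additive_subgroup (Rg g)) \<and>
     (\<forall>g h. \<forall>a\<in>Rg g. \<forall>b\<in>Rg h. a * b \<in> Rg (g + h)) \<and>
     is_direct_sum (UNIV :: 'r set) Rg"

definition graded_module ::
  "('g::group_add \<Rightarrow> 'r::comm_ring_1 set) \<Rightarrow> ('r \<Rightarrow> 'm::ab_group_add \<Rightarrow> 'm) \<Rightarrow> ('g \<Rightarrow> 'm set) \<Rightarrow> bool" where
  "graded_module Rg sc Mg \<longleftrightarrow>
     graded_ring Rg \<and> module sc \<and>
     (\<forall>g. additive_subgroup (Mg g)) \<and>
     (\<forall>g h. \<forall>a\<in>Rg g. \<forall>m\<in>Mg h. sc a m \<in> Mg (g + h)) \<and>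
     is_direct_sum (UNIV :: 'm set) Mg"

definition hom_R :: "('g \<Rightarrow> 'r set) \<Rightarrow> 'r set" where
  "hom_R Rg = (\<Union>g. Rg g)"

definition hom_M :: "('g \<Rightarrow> 'm set) \<Rightarrow> 'm set" where
  "hom_M Mg = (\<Union>g. Mg g)"

definition graded_submodule :: "('r::comm_ring_1 \<Rightarrow> 'm::ab_group_add \<Rightarrow> 'm) \<Rightarrow> ('g \<Rightarrow> 'm set) \<Rightarrow> 'm set \<Rightarrow> bool" where
  "graded_submodule sc Mg U \<longleftrightarrow> module.subspace sc U \<and> is_direct_sum U (\<lambda>g. U \<inter> Mg g)"

definition gr_maximal :: "('r::comm_ring_1 \<Rightarrow> 'm::ab_group_add \<Rightarrow> 'm) \<Rightarrow> ('g \<Rightarrow> 'm set) \<Rightarrow> 'm set \<Rightarrow> bool" where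
  "gr_maximal sc Mg U \<longleftrightarrow> graded_submodule sc Mg U \<and> U \<noteq> UNIV \<and>
     (\<forall>L. graded_submodule sc Mg L \<and> U \<subseteq> L \<longrightarrow> L = U \<or> L = UNIV)"

text \<open>J_gr(M): intersection of all Gr-maximal submodules (M itself if there are none,
  which is automatic since the intersection of the empty family is UNIV).\<close>
definition J_gr :: "('r::comm_ring_1 \<Rightarrow> 'm::ab_group_add \<Rightarrow> 'm) \<Rightarrow> ('g \<Rightarrow> 'm set) \<Rightarrow> 'm set" where
  "J_gr sc Mg = \<Inter>{U. gr_maximal sc Mg U}"

definition set_sum :: "'m::plus set \<Rightarrow> 'm set \<Rightarrow> 'm set" where
  "set_sum A B = {a + b | a b. a \<in> A \<and> b \<in> B}"

definition graded_weakly_Jgr_semiprime ::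
  "('g \<Rightarrow> 'r::comm_ring_1 set) \<Rightarrow> ('r \<Rightarrow> 'm::ab_group_add \<Rightarrow> 'm) \<Rightarrow> ('g \<Rightarrow> 'm set) \<Rightarrow> 'm set \<Rightarrow> bool" where
  "graded_weakly_Jgr_semiprime Rg sc Mg U \<longleftrightarrow>
     graded_submodule sc Mg U \<and> U \<noteq> UNIV \<and>
     (\<forall>r m (n::nat). r \<in> hom_R Rg \<longrightarrow> m \<in> hom_M Mg \<longrightarrow> n > 0 \<longrightarrow>
        sc (r ^ n) m \<noteq> 0 \<longrightarrow> sc (r ^ n) m \<in> U \<longrightarrow> sc r m \<in> set_sum U (J_gr sc Mg))"

end

theory Submission
  imports Defs
begin

definition decomp :: "('g \<Rightarrow> 'm::ab_group_add set) \<Rightarrow> 'm \<Rightarrow> ('g \<Rightarrow> 'm) \<Rightarrow> bool" where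
  "decomp Mg x c \<longleftrightarrow> finite {g. c g \<noteq> 0} \<and> (\<forall>g. c g \<in> Mg g) \<and> x = (\<Sum>g\<in>{g. c g \<noteq> 0}. c g)"

lemma decomp_ex1:
  assumes "graded_module Rg sc Mg"
  shows "\<exists>!c. decomp Mg x c"
proof -
  have "is_direct_sum UNIV Mg" using assms unfolding graded_module_def by blast
  then have "\<forall>x\<in>UNIV. \<exists>!c. finite {g. c g \<noteq> 0} \<and> (\<forall>g. c g \<in> Mg g) \<and> x = (\<Sum>g\<in>{g. c g \<noteq> 0}. c g)"
    unfolding is_direct_sum_def by (rule conjunct1)
  then show ?thesis unfolding decomp_def by (rule bspec) simp
qed

lemma decomp_unique:
  assumes "graded_module Rg sc Mg" "decomp Mg x c" "decomp Mg x d"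
  shows "c = d"
  using decomp_ex1[OF assms(1), of x] assms(2,3) by blast

lemma decomp_scale:
  assumes gm: "graded_module Rg sc Mg" and s: "s \<in> Rg \<delta>" and dc: "decomp Mg x c"
  shows "decomp Mg (sc s x) (\<lambda>h. sc s (c (-\<delta> + h)))"
proof -
  interpret module sc using gm unfolding graded_module_def by blast
  define S where "S = {g. c g \<noteq> 0}"
  define c' where "c' = (\<lambda>h. sc s (c (-\<delta> + h)))"
  have finS: "finite S" using dc unfolding decomp_def S_def by blast
  have sub: "{h. c' h \<noteq> 0} \<subseteq> (\<lambda>g. \<delta> + g) ` S"
  proof
    fix h assume "h \<in> {h. c' h \<noteq> 0}"
    then have "c (-\<delta> + h) \<noteq> 0" unfolding c'_def by auto
    moreover have "h = \<delta> + (-\<delta> + h)" by (simp add: add.assoc[symmetric])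
    ultimately show "h \<in> (\<lambda>g. \<delta> + g) ` S" unfolding S_def by blast
  qed
  have fin: "finite {h. c' h \<noteq> 0}" using finite_subset[OF sub] finS by blast
  have mem: "c' h \<in> Mg h" for h
  proof -
    have "c (-\<delta> + h) \<in> Mg (-\<delta> + h)" using dc unfolding decomp_def by blast
    then have "sc s (c (-\<delta> + h)) \<in> Mg (\<delta> + (-\<delta> + h))"
      using gm s unfolding graded_module_def by blast
    then show ?thesis unfolding c'_def by (simp add: add.assoc[symmetric])
  qed
  have inj: "inj_on (\<lambda>g. \<delta> + g) S" by (auto simp: inj_on_def)
  have "(\<Sum>h\<in>{h. c' h \<noteq> 0}. c' h) = (\<Sum>h\<in>(\<lambda>g. \<delta> + g) ` S. c' h)"
    by (rule sum.mono_neutral_left) (use finS sub in auto)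
  also have "\<dots> = (\<Sum>g\<in>S. c' (\<delta> + g))" by (rule sum.reindex[OF inj, unfolded comp_def])
  also have "\<dots> = (\<Sum>g\<in>S. sc s (c g))" unfolding c'_def by (simp add: add.assoc[symmetric])
  also have "\<dots> = sc s x" using dc unfolding decomp_def S_def by (simp add: scale_sum_right)
  finally show ?thesis using fin mem unfolding decomp_def c'_def by simp
qed

lemma graded_iff:
  assumes gm: "graded_module Rg sc Mg" and sK: "module.subspace sc K"
  shows "graded_submodule sc Mg K \<longleftrightarrow> (\<forall>x\<in>K. \<forall>c. decomp Mg x c \<longrightarrow> (\<forall>g. c g \<in> K))"
proof
  assume gK: "graded_submodule sc Mg K"
  show "\<forall>x\<in>K. \<forall>c. decomp Mg x c \<longrightarrow> (\<forall>g. c g \<in> K)"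
  proof (intro ballI allI impI)
    fix x c g assume x: "x \<in> K" and dc: "decomp Mg x c"
    obtain e where e: "finite {g. e g \<noteq> 0}" "\<forall>g. e g \<in> K \<inter> Mg g" "x = (\<Sum>g\<in>{g. e g \<noteq> 0}. e g)"
    proof -
      have DS: "is_direct_sum K (\<lambda>g. K \<inter> Mg g)" using gK unfolding graded_submodule_def by blast
      have "\<forall>x\<in>K. \<exists>!c. finite {g. c g \<noteq> 0} \<and> (\<forall>g. c g \<in> K \<inter> Mg g) \<and> x = (\<Sum>g\<in>{g. c g \<noteq> 0}. c g)"
        using DS unfolding is_direct_sum_def by (rule conjunct1)
      then have "\<exists>!c. finite {g. c g \<noteq> 0} \<and> (\<forall>g. c g \<in> K \<inter> Mg g) \<and> x = (\<Sum>g\<in>{g. c g \<noteq> 0}. c g)"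
        using x by (rule bspec)
      then show ?thesis using that by (elim ex1E) blast
    qed
    have "decomp Mg x e" using e unfolding decomp_def by blast
    then have "c = e" using decomp_unique[OF gm dc] by blast
    then show "c g \<in> K" using e by blast
  qed
next
  assume H: "\<forall>x\<in>K. \<forall>c. decomp Mg x c \<longrightarrow> (\<forall>g. c g \<in> K)"
  interpret module sc using gm unfolding graded_module_def by blast
  have A: "\<exists>!c. finite {g. c g \<noteq> 0} \<and> (\<forall>g. c g \<in> K \<inter> Mg g) \<and> x = (\<Sum>g\<in>{g. c g \<noteq> 0}. c g)"
    if x: "x \<in> K" for x
  proof -
    obtain c where dc: "decomp Mg x c" using decomp_ex1[OF gm] by blast
    have "finite {g. c g \<noteq> 0} \<and> (\<forall>g. c g \<in> K \<inter> Mg g) \<and> x = (\<Sum>g\<in>{g. c g \<noteq> 0}. c g)"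
      using dc H x unfolding decomp_def by blast
    moreover have "d = c" if "finite {g. d g \<noteq> 0} \<and> (\<forall>g. d g \<in> K \<inter> Mg g) \<and> x = (\<Sum>g\<in>{g. d g \<noteq> 0}. d g)" for d
    proof -
      have "decomp Mg x d" using that unfolding decomp_def by blast
      then show ?thesis using decomp_unique[OF gm dc] by blast
    qed
    ultimately show ?thesis by blast
  qed
  have B: "(\<Sum>g\<in>{g. c g \<noteq> 0}. c g) \<in> K" if "\<forall>g. c g \<in> K \<inter> Mg g" for c
    by (rule subspace_sum[OF sK]) (use that in blast)
  have D: "is_direct_sum K (\<lambda>g. K \<inter> Mg g)"
    unfolding is_direct_sum_def
  proof (rule conjI)
    show "\<forall>x\<in>K. \<exists>!c. finite {g. c g \<noteq> 0} \<and> (\<forall>g. c g \<in> K \<inter> Mg g) \<and> x = (\<Sum>g\<in>{g. c g \<noteq> 0}. c g)"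
      using A by blast
    show "\<forall>c. finite {g. c g \<noteq> 0} \<and> (\<forall>g. c g \<in> K \<inter> Mg g) \<longrightarrow> (\<Sum>g\<in>{g. c g \<noteq> 0}. c g) \<in> K"
      using B by blast
  qed
  show "graded_submodule sc Mg K"
    unfolding graded_submodule_def using sK D by blast
qed

lemma preimage_graded:
  assumes gm: "graded_module Rg sc Mg" and gL: "graded_submodule sc Mg L" and s: "s \<in> Rg \<delta>"
  shows "graded_submodule sc Mg {z. sc s z \<in> L}"
proof -
  interpret module sc using gm unfolding graded_module_def by blast
  have sL: "subspace L" using gL unfolding graded_submodule_def by blast
  have sK: "subspace {z. sc s z \<in> L}"
  proof (rule subspaceI)
    show "0 \<in> {z. sc s z \<in> L}" using subspace_0[OF sL] by simp
    show "x + y \<in> {z. sc s z \<in> L}" if "x \<in> {z. sc s z \<in> L}" "y \<in> {z. sc s z \<in> L}" for x y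
      using that subspace_add[OF sL] by (simp add: scale_right_distrib)
    show "sc c x \<in> {z. sc s z \<in> L}" if "x \<in> {z. sc s z \<in> L}" for c x
    proof -
      have "sc c (sc s x) \<in> L" using that subspace_scale[OF sL, of "sc s x" c] by simp
      moreover have "c * s = s * c" by (rule mult.commute)
      ultimately show ?thesis by simp
    qed
  qed
  show ?thesis
  proof (subst graded_iff[OF gm sK], intro ballI allI impI)
    fix x c g assume x: "x \<in> {z. sc s z \<in> L}" and dc: "decomp Mg x c"
    have "decomp Mg (sc s x) (\<lambda>h. sc s (c (-\<delta> + h)))" by (rule decomp_scale[OF gm s dc])
    moreover have "\<forall>x\<in>L. \<forall>c. decomp Mg x c \<longrightarrow> (\<forall>g. c g \<in> L)"
      using graded_iff[OF gm sL] gL by (rule iffD1)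
    moreover have "sc s x \<in> L" using x by simp
    ultimately have "\<forall>h. sc s (c (-\<delta> + h)) \<in> L" by (meson bspec)
    then have "sc s (c (-\<delta> + (\<delta> + g))) \<in> L" by (rule spec)
    then show "c g \<in> {z. sc s z \<in> L}" by (simp add: add.assoc[symmetric])
  qed
qed

lemma pow_hom:
  assumes gr: "graded_ring Rg" and r: "r \<in> Rg g0"
  shows "\<exists>\<delta>. r ^ Suc k \<in> Rg \<delta>"
proof (induction k)
  case 0 then show ?case using r by auto
next
  case (Suc k)
  then obtain \<delta> where "r ^ Suc k \<in> Rg \<delta>" by blast
  then have "r * r ^ Suc k \<in> Rg (g0 + \<delta>)" using gr r unfolding graded_ring_def by blast
  then show ?case by (metis power_Suc)
qed

lemma J_subspace:
  assumes gm: "graded_module Rg sc Mg"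
  shows "module.subspace sc (J_gr sc Mg)"
proof -
  interpret module sc using gm unfolding graded_module_def by blast
  show ?thesis unfolding J_gr_def
    by (rule subspace_Inter) (auto simp: gr_maximal_def graded_submodule_def)
qed

lemma set_sum_subspace:
  assumes m: "module sc" and A: "module.subspace sc A" and B: "module.subspace sc B"
  shows "module.subspace sc (set_sum A B)"
proof -
  interpret module sc by (rule m)
  show ?thesis
  proof (rule subspaceI)
    show "0 \<in> set_sum A B" unfolding set_sum_def using subspace_0[OF A] subspace_0[OF B]
      by (metis (mono_tags, lifting) add_0 mem_Collect_eq)
    show "x + y \<in> set_sum A B" if hx: "x \<in> set_sum A B" and hy: "y \<in> set_sum A B" for x y
    proof -
      obtain a b a' b' where "x = a + b" "y = a' + b'" "a \<in> A" "b \<in> B" "a' \<in> A" "b' \<in> B"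
        using hx hy unfolding set_sum_def by blast
      then have "x + y = (a + a') + (b + b')" "a + a' \<in> A" "b + b' \<in> B"
        using subspace_add[OF A] subspace_add[OF B] by (auto simp: algebra_simps)
      then show ?thesis unfolding set_sum_def by blast
    qed
    show "sc c x \<in> set_sum A B" if hx: "x \<in> set_sum A B" for c x
    proof -
      obtain a b where "x = a + b" "a \<in> A" "b \<in> B"
        using hx unfolding set_sum_def by blast
      then have "sc c x = sc c a + sc c b" "sc c a \<in> A" "sc c b \<in> B"
        using subspace_scale[OF A] subspace_scale[OF B] by (auto simp: scale_right_distrib)
      then show ?thesis unfolding set_sum_def by blast
    qed
  qed
qed

lemma nil_in_J:
  assumes gm: "graded_module Rg sc Mg" and r: "r \<in> Rg g0" and z: "sc (r ^ Suc k) y = 0"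
  shows "sc r y \<in> J_gr sc Mg"
  unfolding J_gr_def
proof (rule InterI)
  interpret module sc using gm unfolding graded_module_def by blast
  fix L assume "L \<in> {U. gr_maximal sc Mg U}"
  then have gL: "graded_submodule sc Mg L" and maxL: "\<forall>L'. graded_submodule sc Mg L' \<and> L \<subseteq> L' \<longrightarrow> L' = L \<or> L' = UNIV"
    unfolding gr_maximal_def by blast+
  have sL: "subspace L" using gL unfolding graded_submodule_def by blast
  have gL': "graded_submodule sc Mg {z. sc r z \<in> L}" by (rule preimage_graded[OF gm gL r])
  have "L \<subseteq> {z. sc r z \<in> L}" using subspace_scale[OF sL] by blast
  then have cases: "{z. sc r z \<in> L} = L \<or> {z. sc r z \<in> L} = UNIV" using maxL gL' by blast
  show "sc r y \<in> L"
  proof (rule ccontr)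
    assume ny: "sc r y \<notin> L"
    then have eq: "{z. sc r z \<in> L} = L" using cases by auto
    have "sc (r ^ Suc j) y \<notin> L" for j
    proof (induction j)
      case 0 then show ?case using ny by simp
    next
      case (Suc j)
      show ?case
      proof
        assume "sc (r ^ Suc (Suc j)) y \<in> L"
        then have "sc r (sc (r ^ Suc j) y) \<in> L" by (simp del: power_Suc add: power_Suc[of r "Suc j"])
        then have "sc (r ^ Suc j) y \<in> {z. sc r z \<in> L}" by simp
        then show False using eq Suc by blast
      qed
    qed
    then show False using z subspace_0[OF sL] by metis
  qed
qed

theorem corollary2p6:
  fixes Rg :: "'g::group_add \<Rightarrow> 'r::comm_ring_1 set"
    and sc :: "'r \<Rightarrow> 'm::ab_group_add \<Rightarrow> 'm"
    and Mg :: "'g \<Rightarrow> 'm set"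
    and U :: "'m set"
  assumes "graded_module Rg sc Mg"
    and "graded_submodule sc Mg U"
    and "U \<noteq> UNIV"
  shows "graded_weakly_Jgr_semiprime Rg sc Mg U \<longleftrightarrow>
    (\<forall>r K (n::nat). r \<in> hom_R Rg \<longrightarrow> graded_submodule sc Mg K \<longrightarrow> n > 0 \<longrightarrow>
       (sc (r ^ n) ` K \<noteq> {0} \<and> sc (r ^ n) ` K \<subseteq> U) \<longrightarrow>
       sc r ` K \<subseteq> set_sum U (J_gr sc Mg))"
proof -
  note gm = assms(1)
  interpret module sc using gm unfolding graded_module_def by blast
  have gr: "graded_ring Rg" using gm unfolding graded_module_def by blast
  have sU: "subspace U" using assms(2) unfolding graded_submodule_def by blast
  have sUJ: "subspace (set_sum U (J_gr sc Mg))"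
    by (rule set_sum_subspace[OF module_axioms sU J_subspace[OF gm]])
  have UJ1: "x \<in> set_sum U (J_gr sc Mg)" if "x \<in> J_gr sc Mg" for x
    using that subspace_0[OF sU] unfolding set_sum_def by force
  show ?thesis
  proof
    assume W: "graded_weakly_Jgr_semiprime Rg sc Mg U"
    show "\<forall>r K (n::nat). r \<in> hom_R Rg \<longrightarrow> graded_submodule sc Mg K \<longrightarrow> n > 0 \<longrightarrow>
       (sc (r ^ n) ` K \<noteq> {0} \<and> sc (r ^ n) ` K \<subseteq> U) \<longrightarrow>
       sc r ` K \<subseteq> set_sum U (J_gr sc Mg)"
    proof (intro allI impI subsetI)
      fix r K and n :: nat and y
      assume r: "r \<in> hom_R Rg" and gK: "graded_submodule sc Mg K" and n: "n > 0"
        and KU: "sc (r ^ n) ` K \<noteq> {0} \<and> sc (r ^ n) ` K \<subseteq> U" and y: "y \<in> sc r ` K"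
      obtain x where x: "x \<in> K" and yx: "y = sc r x" using y by blast
      obtain g0 where rg: "r \<in> Rg g0" using r unfolding hom_R_def by blast
      obtain k where nk: "n = Suc k" using n by (cases n) auto
      have sK: "subspace K" using gK unfolding graded_submodule_def by blast
      obtain c where dc: "decomp Mg x c" using decomp_ex1[OF gm] by blast
      have cK: "c g \<in> K" for g using graded_iff[OF gm sK] gK x dc by blast
      have cM: "c g \<in> hom_M Mg" for g using dc unfolding decomp_def hom_M_def by blast
      have each: "sc r (c g) \<in> set_sum U (J_gr sc Mg)" for g
      proof (cases "sc (r ^ n) (c g) = 0")
        case True
        then show ?thesis using nil_in_J[OF gm rg] nk UJ1 by blast
      next
        case False
        have "sc (r ^ n) (c g) \<in> U" using KU cK by blast
        then show ?thesis using W False r cM n unfolding graded_weakly_Jgr_semiprime_def by blast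
      qed
      have "y = (\<Sum>g\<in>{g. c g \<noteq> 0}. sc r (c g))"
        using dc yx unfolding decomp_def by (simp add: scale_sum_right)
      then show "y \<in> set_sum U (J_gr sc Mg)"
        using subspace_sum[OF sUJ, of "{g. c g \<noteq> 0}" "\<lambda>g. sc r (c g)"] each by simp
    qed
  next
    assume H: "\<forall>r K (n::nat). r \<in> hom_R Rg \<longrightarrow> graded_submodule sc Mg K \<longrightarrow> n > 0 \<longrightarrow>
       (sc (r ^ n) ` K \<noteq> {0} \<and> sc (r ^ n) ` K \<subseteq> U) \<longrightarrow>
       sc r ` K \<subseteq> set_sum U (J_gr sc Mg)"
    show "graded_weakly_Jgr_semiprime Rg sc Mg U"
      unfolding graded_weakly_Jgr_semiprime_def
    proof (intro conjI allI impI)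
      show "graded_submodule sc Mg U" by (rule assms(2))
      show "U \<noteq> UNIV" by (rule assms(3))
      fix r m and n :: nat
      assume r: "r \<in> hom_R Rg" and m: "m \<in> hom_M Mg" and n: "n > 0"
        and nz: "sc (r ^ n) m \<noteq> 0" and inU: "sc (r ^ n) m \<in> U"
      obtain g0 where rg: "r \<in> Rg g0" using r unfolding hom_R_def by blast
      obtain k where nk: "n = Suc k" using n by (cases n) auto
      obtain \<delta> where d: "r ^ n \<in> Rg \<delta>" using pow_hom[OF gr rg, of k] nk by blast
      define K where "K = {z. sc (r ^ n) z \<in> U}"
      have gK: "graded_submodule sc Mg K" unfolding K_def by (rule preimage_graded[OF gm assms(2) d])
      have mK: "m \<in> K" using inU unfolding K_def by blast
      have "sc (r ^ n) ` K \<noteq> {0}" using mK nz by blast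
      moreover have "sc (r ^ n) ` K \<subseteq> U" unfolding K_def by blast
      ultimately have "sc r ` K \<subseteq> set_sum U (J_gr sc Mg)" using H r gK n by blast
      then show "sc r m \<in> set_sum U (J_gr sc Mg)" using mK by blast
    qed
  qed
qed

end
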